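(* Let $D\ge2$ be an integer and $\mathbf p=(p_1,\dots,p_D)$ a probability distribution with Shannon entropy $H(\mathbf p)=-\sum_ip_i\log_2p_i$, and for $\mathbf i=(i_1,\dots,i_N)\in\{1,\dots,D\}^N$ put $p_{\mathbf i}=p_{i_1}\cdots p_{i_N}$. Fix $R<\frac{H(\mathbf p)+1}{2}$, and for each $N$ let $S(N)$ be a collection of pairs $(\mathbf i,\mathbf s)$ with $\mathbf i\in\{1,\dots,D\}^N$ and $\mathbf s\in\{+,-\}^{N-1}$ such that $|S(N)|=2^{2NR-1}$. Then for every $\eta>0$ there exists $N_0$ such that for all $N\ge N_0$, \[ \sum_{(\mathbf i,\mathbf s)\in S(N)}p_{\mathbf i}\frac{1}{2^{N-1}}<\eta . \] *)

theory Defs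
  imports Complex_Main
begin

text \<open>Shannon entropy (base 2) of a distribution p on {1..D}; terms with p i = 0
  contribute 0 (in Isabelle, log 2 0 = 0 anyway, and 0 * _ = 0).\<close>
definition shannon_entropy :: "nat \<Rightarrow> (nat \<Rightarrow> real) \<Rightarrow> real" where
  "shannon_entropy D p = - (\<Sum>i=1..D. p i * log 2 (p i))"

definition prob_dist :: "nat \<Rightarrow> (nat \<Rightarrow> real) \<Rightarrow> bool" where
  "prob_dist D p \<longleftrightarrow> (\<forall>i\<in>{1..D}. 0 \<le> p i) \<and> (\<Sum>i=1..D. p i) = 1"

definition idx_strings :: "nat \<Rightarrow> nat \<Rightarrow> nat list set" where
  "idx_strings D N = {xs. length xs = N \<and> set xs \<subseteq> {1..D}}"

text \<open>Sign strings s in {+,-}^(N-1), as boolean lists (True = +).\<close>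
definition sign_strings :: "nat \<Rightarrow> bool list set" where
  "sign_strings N = {ss. length ss = N - 1}"

definition prod_prob :: "(nat \<Rightarrow> real) \<Rightarrow> nat list \<Rightarrow> real" where
  "prod_prob p xs = (\<Prod>x\<leftarrow>xs. p x)"

end

theory Submission imports Defs begin

lemma exp_le_quad:
  fixes y :: real assumes "y \<le> 1" shows "exp y \<le> 1 + y + y\<^sup>2"
proof (cases "y \<ge> 0")
  case True thus ?thesis using exp_bound assms by blast
next
  case False
  define t where "t = - y"
  have t: "t > 0" using False t_def by simp
  have "1 + t \<le> exp t" by simp
  hence "exp (-t) \<le> 1 / (1 + t)" using t by (simp add: exp_minus field_simps)
  also have "\<dots> \<le> 1 - t + t\<^sup>2"
  proof -
    have "1 \<le> (1 - t + t\<^sup>2) * (1 + t)" using t by (simp add: algebra_simps power2_eq_square power3_eq_cube[symmetric])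
    thus ?thesis using t by (simp add: field_simps)
  qed
  finally show ?thesis by (simp add: t_def)
qed

lemma sum_lists_prod:
  fixes f :: "'a \<Rightarrow> real"
  assumes "finite A"
  shows "(\<Sum>xs\<in>{xs. set xs \<subseteq> A \<and> length xs = n}. \<Prod>x\<leftarrow>xs. f x) = (\<Sum>x\<in>A. f x) ^ n"
proof (induction n)
  case 0
  have "{xs. set xs \<subseteq> A \<and> length xs = 0} = {[]}" by auto
  thus ?case by simp
next
  case (Suc n)
  let ?L = "{xs. set xs \<subseteq> A \<and> length xs = n}"
  have inj: "inj_on (\<lambda>(xs, n). n#xs) (?L \<times> A)" by (auto simp: inj_on_def)
  have "(\<Sum>xs\<in>{xs. set xs \<subseteq> A \<and> length xs = Suc n}. \<Prod>x\<leftarrow>xs. f x)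
      = (\<Sum>(xs,y)\<in>?L \<times> A. f y * (\<Prod>x\<leftarrow>xs. f x))"
    unfolding lists_length_Suc_eq by (subst sum.reindex[OF inj]) (simp add: case_prod_unfold)
  also have "\<dots> = (\<Sum>xs\<in>?L. \<Sum>y\<in>A. f y * (\<Prod>x\<leftarrow>xs. f x))"
    by (subst sum.cartesian_product) simp
  also have "\<dots> = (\<Sum>xs\<in>?L. (\<Prod>x\<leftarrow>xs. f x)) * (\<Sum>y\<in>A. f y)"
    by (simp add: sum_distrib_left sum_distrib_right mult.commute)
  finally show ?case using Suc by simp
qed

lemma prod_powr_list:
  fixes p :: "'a \<Rightarrow> real" and c s :: real
  assumes "\<forall>x\<in>set xs. 0 \<le> p x" "0 \<le> c"
  shows "(\<Prod>x\<leftarrow>xs. p x * (c * p x) powr s) = (\<Prod>x\<leftarrow>xs. p x) * (c ^ length xs * (\<Prod>x\<leftarrow>xs. p x)) powr s"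
  using assms(1)
proof (induction xs)
  case Nil thus ?case by simp
next
  case (Cons y xs)
  have py: "0 \<le> p y" using Cons by simp
  have P: "0 \<le> (\<Prod>x\<leftarrow>xs. p x)" using Cons.prems by (induction xs) auto
  have "(c * p y) powr s * (c ^ length xs * (\<Prod>x\<leftarrow>xs. p x)) powr s
      = (c * p y * (c ^ length xs * (\<Prod>x\<leftarrow>xs. p x))) powr s"
    using py P assms(2) by (simp add: powr_mult)
  thus ?case using Cons by (simp add: algebra_simps)
qed

lemma point_bound:
  fixes P t s :: real
  assumes "0 \<le> P" "0 < t" "0 \<le> s"
  shows "P \<le> t + P * (P / t) powr s"
proof (cases "P \<le> t")
  case True thus ?thesis using assms by (simp add: add_increasing2)
next
  case False
  hence "P / t \<ge> 1" using assms by simp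
  hence "(P / t) powr s \<ge> 1" using assms by (simp add: ge_one_powr_ge_zero)
  hence "P \<le> P * (P / t) powr s" using assms by (simp add: mult_le_cancel_left1)
  thus ?thesis using assms by simp
qed

lemma exists_s:
  assumes pd: "prob_dist D p" and aH: "a < shannon_entropy D p"
  shows "\<exists>s>0. (\<Sum>j=1..D. p j * (2 powr a * p j) powr s) < 1"
proof -
  define H where "H = shannon_entropy D p"
  define L where "L = ln (2::real)"
  have L: "L > 0" unfolding L_def by simp
  define y where "y j = a * L + ln (p j)" for j
  define K where "K = (\<Sum>j=1..D. \<bar>y j\<bar>)"
  define C where "C = (\<Sum>j=1..D. p j * (y j)\<^sup>2)"
  define \<delta> where "\<delta> = L * (H - a) / 2"
  define s where "s = min (1 / (K + 1)) (\<delta> / (C + 1))"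
  have p0: "\<And>j. j \<in> {1..D} \<Longrightarrow> 0 \<le> p j" and p1: "(\<Sum>j=1..D. p j) = 1"
    using pd unfolding prob_dist_def by auto
  have K0: "K \<ge> 0" unfolding K_def by (simp add: sum_nonneg)
  have C0: "C \<ge> 0" unfolding C_def using p0 by (intro sum_nonneg) simp
  have d0: "\<delta> > 0" unfolding \<delta>_def H_def using L aH by simp
  have s0: "s > 0" unfolding s_def using K0 C0 d0 by simp
  have sK: "s * K \<le> 1"
  proof -
    have "s \<le> 1 / (K + 1)" unfolding s_def by simp
    hence "s * (K + 1) \<le> 1" using K0 by (simp add: field_simps)
    thus ?thesis using s0 by (simp add: algebra_simps)
  qed
  have sC: "s * C \<le> \<delta>"
  proof -
    have "s \<le> \<delta> / (C + 1)" unfolding s_def by simp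
    hence "s * C \<le> \<delta> / (C + 1) * C" using C0 by (rule mult_right_mono)
    also have "\<dots> \<le> \<delta>" using C0 d0 by (simp add: field_simps)
    finally show ?thesis .
  qed
  have pt: "p j * (2 powr a * p j) powr s \<le> p j * (1 + s * y j + (s * y j)\<^sup>2)" if j: "j \<in> {1..D}" for j
  proof (cases "p j = 0")
    case True thus ?thesis by simp
  next
    case False
    hence pj: "p j > 0" using p0[OF j] by simp
    have "(2 powr a * p j) powr s = exp (s * y j)"
      using pj by (simp add: powr_def ln_mult y_def L_def mult.commute)
    moreover have "s * y j \<le> 1"
    proof -
      have "\<bar>y j\<bar> \<le> K" unfolding K_def
        by (rule member_le_sum[where f="\<lambda>j. \<bar>y j\<bar>", OF j]) auto
      hence "s * y j \<le> s * K" using s0 by (smt (verit) mult_left_mono)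
      thus ?thesis using sK by simp
    qed
    ultimately show ?thesis using exp_le_quad[of "s * y j"] pj by simp
  qed
  have ent: "(\<Sum>j=1..D. p j * ln (p j)) = - H * L"
  proof -
    have "H = - (\<Sum>j=1..D. p j * ln (p j)) / L"
      unfolding H_def shannon_entropy_def L_def log_def by (simp add: sum_divide_distrib)
    thus ?thesis using L by simp
  qed
  have "(\<Sum>j=1..D. p j * (2 powr a * p j) powr s) \<le> (\<Sum>j=1..D. p j * (1 + s * y j + (s * y j)\<^sup>2))"
    by (rule sum_mono) (rule pt)
  also have "\<dots> = (\<Sum>j=1..D. p j) + s * (a * L * (\<Sum>j=1..D. p j) + (\<Sum>j=1..D. p j * ln (p j))) + s\<^sup>2 * C"
    unfolding C_def y_def
    by (simp add: algebra_simps power2_eq_square sum.distrib sum_distrib_left sum_distrib_right)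
  also have "\<dots> = 1 - 2 * s * \<delta> + s * (s * C)"
    unfolding p1 ent \<delta>_def by (simp add: field_simps power2_eq_square)
  also have "\<dots> \<le> 1 - 2 * s * \<delta> + s * \<delta>" using sC s0 by (simp add: mult_left_mono)
  also have "\<dots> < 1" using s0 d0 by simp
  finally show ?thesis using s0 by blast
qed

theorem lemma3:
  fixes D :: nat and p :: "nat \<Rightarrow> real" and R :: real
    and S :: "nat \<Rightarrow> (nat list \<times> bool list) set"
  assumes "D \<ge> 2"
    and "prob_dist D p"
    and "R < (shannon_entropy D p + 1) / 2"
    and "\<And>N. N \<ge> 1 \<Longrightarrow> S N \<subseteq> idx_strings D N \<times> sign_strings N"
    and "\<And>N. N \<ge> 1 \<Longrightarrow> card (S N) = nat \<lfloor>2 powr (2 * real N * R - 1)\<rfloor>"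
  shows "\<forall>\<eta>>0. \<exists>N0. \<forall>N\<ge>N0.
           (\<Sum>(xs, ss)\<in>S N. prod_prob p xs * (1 / 2 ^ (N - 1))) < \<eta>"
proof -
  define H where "H = shannon_entropy D p"
  define a where "a = (2 * R - 1 + H) / 2"
  have aH: "a < shannon_entropy D p" using assms(3) unfolding a_def H_def by simp
  obtain s where s0: "s > 0" and g1: "(\<Sum>j=1..D. p j * (2 powr a * p j) powr s) < 1"
    using exists_s[OF assms(2) aH] by blast
  define g where "g = (\<Sum>j=1..D. p j * (2 powr a * p j) powr s)"
  define c where "c = (2::real) powr a"
  have c0: "c > 0" unfolding c_def by simp
  have p0: "\<And>j. j \<in> {1..D} \<Longrightarrow> 0 \<le> p j"
    using assms(2) unfolding prob_dist_def by auto
  have g0: "g \<ge> 0" unfolding g_def using p0 by (intro sum_nonneg) simp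
  define b where "b = (2::real) powr (2 * R - 1 - a)"
  have b0: "b \<ge> 0" unfolding b_def by simp
  have "2 * R - 1 - a < 0" unfolding a_def H_def using assms(3) by simp
  hence b1: "b < 1" unfolding b_def by (simp add: powr_less_one)
  have bound: "(\<Sum>(xs, ss)\<in>S N. prod_prob p xs * (1 / 2 ^ (N - 1))) \<le> b ^ N + g ^ N"
    if N: "N \<ge> 1" for N
  proof -
    define w :: real where "w = 1 / 2 ^ (N - 1)"
    define t where "t = 1 / c ^ N"
    have t0: "t > 0" unfolding t_def using c0 by simp
    define F where "F xs = (\<Prod>x\<leftarrow>xs. p x * (c * p x) powr s)" for xs
    have Sfin: "finite (idx_strings D N \<times> sign_strings N)"
    proof -
      have "finite (idx_strings D N)" unfolding idx_strings_def
        using finite_lists_length_eq[of "{1..D}" N] by (simp add: conj_commute)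
      moreover have "finite (sign_strings N)" unfolding sign_strings_def
        using finite_lists_length_eq[of "UNIV::bool set" "N-1"] by simp
      ultimately show ?thesis by simp
    qed
    have SS: "S N \<subseteq> idx_strings D N \<times> sign_strings N" using assms(4) N by simp
    have fin: "finite (S N)" using Sfin SS finite_subset by blast
    have F0: "F xs \<ge> 0" if "xs \<in> idx_strings D N" for xs
    proof -
      have "\<forall>x\<in>set xs. 0 \<le> p x" using that p0 unfolding idx_strings_def by auto
      thus ?thesis unfolding F_def by (induction xs) (auto intro!: mult_nonneg_nonneg)
    qed
    have pt: "prod_prob p xs \<le> t + F xs" if "xs \<in> idx_strings D N" for xs
    proof -
      have nn: "\<forall>x\<in>set xs. 0 \<le> p x" and len: "length xs = N"
        using that p0 unfolding idx_strings_def by auto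
      have P0: "prod_prob p xs \<ge> 0" unfolding prod_prob_def using nn by (induction xs) auto
      have "F xs = prod_prob p xs * (prod_prob p xs / t) powr s"
        unfolding F_def prod_powr_list[OF nn less_imp_le[OF c0]] prod_prob_def t_def len
        by (simp add: mult.commute)
      thus ?thesis using point_bound[OF P0 t0 less_imp_le[OF s0]] by simp
    qed
    have "(\<Sum>(xs, ss)\<in>S N. prod_prob p xs * w) \<le> (\<Sum>(xs, ss)\<in>S N. (t + F xs) * w)"
      using SS pt unfolding w_def by (intro sum_mono) (force simp: case_prod_unfold intro: divide_right_mono)
    also have "\<dots> = real (card (S N)) * t * w + w * (\<Sum>(xs, ss)\<in>S N. F xs)"
      by (simp add: case_prod_unfold sum.distrib sum_distrib_left sum_distrib_right algebra_simps)
    also have "(\<Sum>(xs, ss)\<in>S N. F xs) \<le> (\<Sum>(xs, ss)\<in>idx_strings D N \<times> sign_strings N. F xs)"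
      using SS F0 Sfin by (intro sum_mono2) auto
    also have "\<dots> = real (card (sign_strings N)) * (\<Sum>xs\<in>idx_strings D N. F xs)"
      by (simp add: sum.cartesian_product[symmetric] sum_distrib_left mult.commute)
    also have "(\<Sum>xs\<in>idx_strings D N. F xs) = g ^ N"
      unfolding F_def g_def c_def idx_strings_def
      using sum_lists_prod[of "{1..D}" "\<lambda>x. p x * (2 powr a * p x) powr s" N]
      by (simp add: conj_commute)
    also have "card (sign_strings N) = 2 ^ (N - 1)"
      unfolding sign_strings_def using card_lists_length_eq[of "UNIV::bool set" "N-1"] by simp
    finally have A: "(\<Sum>(xs, ss)\<in>S N. prod_prob p xs * w) \<le> real (card (S N)) * t * w + g ^ N"
      by (simp add: w_def) (metis divide_right_mono zero_le_numeral zero_le_power)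
    have "real (card (S N)) \<le> 2 powr (2 * real N * R - 1)"
      using assms(5)[OF N] by simp
    hence "real (card (S N)) * t * w \<le> 2 powr (2 * real N * R - 1) * t * w"
      using t0 unfolding w_def by (intro mult_right_mono) auto
    also have "\<dots> = b ^ N"
    proof -
      have e1: "c ^ N = 2 powr (a * N)" unfolding c_def
        using powr_realpow[of "2 powr a" N] powr_powr[of 2 a "real N"] by simp
      have e2: "(2::real) ^ (N - 1) = 2 powr (real N - 1)"
        using N powr_realpow[of 2 "N - 1"] by (simp add: of_nat_diff)
      have e3: "b ^ N = 2 powr ((2 * R - 1 - a) * N)" unfolding b_def
        using powr_realpow[of "2 powr (2 * R - 1 - a)" N] powr_powr[of 2 "2 * R - 1 - a" "real N"] by simp
      have e4: "2 powr (2 * real N * R - 1) * (1 / (2 powr (a * N))) * (1 / 2 powr (real N - 1))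
          = (2::real) powr ((2 * real N * R - 1) - (a * N) - (real N - 1))"
        by (simp only: powr_diff[symmetric] divide_divide_eq_left times_divide_eq_right mult_1_right)
      have e5: "(2 * real N * R - 1) - (a * N) - (real N - 1) = (2 * R - 1 - a) * N"
        by (simp add: algebra_simps)
      show ?thesis unfolding t_def w_def e1 e2 e4 e5 e3 by (rule refl)
    qed
    finally have Bd: "real (card (S N)) * t * w \<le> b ^ N" .
    show ?thesis using A Bd unfolding w_def by linarith
  qed
  have lim: "(\<lambda>N. b ^ N + g ^ N) \<longlonglongrightarrow> 0"
    using tendsto_add[OF LIMSEQ_realpow_zero[OF b0 b1] LIMSEQ_realpow_zero[OF g0 g1[folded g_def]]]
    by simp
  show ?thesis
  proof (intro allI impI)
    fix \<eta> :: real assume e: "\<eta> > 0"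
    have "eventually (\<lambda>N. b ^ N + g ^ N < \<eta>) sequentially"
      using order_tendstoD(2)[OF lim e] .
    then obtain N1 where N1: "\<And>N. N \<ge> N1 \<Longrightarrow> b ^ N + g ^ N < \<eta>"
      unfolding eventually_sequentially by blast
    show "\<exists>N0. \<forall>N\<ge>N0. (\<Sum>(xs, ss)\<in>S N. prod_prob p xs * (1 / 2 ^ (N - 1))) < \<eta>"
    proof (intro exI[of _ "max 1 N1"] allI impI)
      fix N assume "max 1 N1 \<le> N"
      hence "1 \<le> N" "N1 \<le> N" by auto
      thus "(\<Sum>(xs, ss)\<in>S N. prod_prob p xs * (1 / 2 ^ (N - 1))) < \<eta>"
        using bound N1 by (meson le_less_trans)
    qed
  qed
qed

end
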